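(* Let $n\ge 3$ and let $H:=\sum_{1\le i\ne j\le n}[X_{ij}(R),X_{ji}(R)]\subseteq \mathfrak{stl}_n(R)$ (the $K$-span of all brackets $[X_{ij}(a),X_{ji}(b)]$, $a,b\in R$). Then $H$ is a subalgebra of $\mathfrak{stl}_n(R)$ containing the center of $\mathfrak{stl}_n(R)$, $[H,X_{ij}(R)]\subseteq X_{ij}(R)$ for all $i\neq j$, and $$\mathfrak{stl}_n(R)=H\oplus\bigoplus_{1\le i\ne j\le n}X_{ij}(R)$$ as $K$-modules, where $X_{ij}(R)=\{X_{ij}(a):a\in R\}$.
   Context: $K$ is a unital commutative ring and $R$ is a unital associative $K$-algebra which is free as a $K$-module with a $K$-basis containing $1$. A Leibniz algebra over $K$ is a $K$-module $L$ with a $K$-bilinear bracket satisfying $[x,[y,z]]=[[x,y],z]-[[x,z],y]$ for all $x,y,z\in L$. The center of $L$ is $\{z\in L: [z,L]=[L,z]=0\}$. For $n\ge 3$, the Steinberg Leibniz algebra $\mathfrak{stl}_n(R)$ is the Leibniz algebra over $K$ generated by symbols $X_{ij}(a)$, $a\in R$, $1\le i\ne j\le n$, subject to: $X_{ij}(k_1a+k_2b)=k_1X_{ij}(a)+k_2X_{ij}(b)$ ($k_1,k_2\in K$); $[X_{ij}(a),X_{jk}(b)]=X_{ik}(ab)$ and $[X_{ij}(a),X_{ki}(b)]=-X_{kj}(ba)$ for distinct $i,j,k$; $[X_{ij}(a),X_{kl}(b)]=0$ for $j\ne k$, $i\ne l$. *)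

theory Defs
  imports Main
begin

text \<open>K is the type 'k (comm_ring_1); R is the type 'r (ring_1) with a K-scalar
action sm making it a unital associative K-algebra.\<close>

definition is_K_algebra :: "('k::comm_ring_1 \<Rightarrow> 'r::ring_1 \<Rightarrow> 'r) \<Rightarrow> bool" where
  "is_K_algebra sm \<longleftrightarrow>
     (\<forall>k a b. sm k (a + b) = sm k a + sm k b) \<and>
     (\<forall>k l a. sm (k + l) a = sm k a + sm l a) \<and>
     (\<forall>k l a. sm (k * l) a = sm k (sm l a)) \<and>
     (\<forall>a. sm 1 a = a) \<and>
     (\<forall>k a b. sm k (a * b) = sm k a * b) \<and>
     (\<forall>k a b. sm k (a * b) = a * sm k b)"

definition is_K_basis :: "('k::comm_ring_1 \<Rightarrow> 'r::ring_1 \<Rightarrow> 'r) \<Rightarrow> 'r set \<Rightarrow> bool" where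
  "is_K_basis sm B \<longleftrightarrow>
     (\<forall>r. \<exists>!c. finite {b. c b \<noteq> 0} \<and> (\<forall>b. b \<notin> B \<longrightarrow> c b = 0) \<and>
              r = (\<Sum>b\<in>{b. c b \<noteq> 0}. sm (c b) b))"

section \<open>Expressions of the free (non-associative) K-algebra on the symbols X_ij(a)\<close>

datatype ('k, 'r) expr =
    Gen nat nat 'r
  | Zero
  | Add "('k, 'r) expr" "('k, 'r) expr"
  | Smul 'k "('k, 'r) expr"
  | Br "('k, 'r) expr" "('k, 'r) expr"

fun wf_expr :: "nat \<Rightarrow> ('k, 'r) expr \<Rightarrow> bool" where
  "wf_expr n (Gen i j a) \<longleftrightarrow> 1 \<le> i \<and> i \<le> n \<and> 1 \<le> j \<and> j \<le> n \<and> i \<noteq> j"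
| "wf_expr n Zero \<longleftrightarrow> True"
| "wf_expr n (Add x y) \<longleftrightarrow> wf_expr n x \<and> wf_expr n y"
| "wf_expr n (Smul k x) \<longleftrightarrow> wf_expr n x"
| "wf_expr n (Br x y) \<longleftrightarrow> wf_expr n x \<and> wf_expr n y"

definition valid_idx :: "nat \<Rightarrow> nat \<Rightarrow> bool" where
  "valid_idx n i \<longleftrightarrow> 1 \<le> i \<and> i \<le> n"

text \<open>The congruence defining st l_n(R): smallest congruence making the expressions a
Leibniz algebra over K and imposing the Steinberg relations.\<close>
inductive stl_eq :: "nat \<Rightarrow> ('k::comm_ring_1 \<Rightarrow> 'r::ring_1 \<Rightarrow> 'r) \<Rightarrow>
    ('k, 'r) expr \<Rightarrow> ('k, 'r) expr \<Rightarrow> bool"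
  for n :: nat and sm :: "'k::comm_ring_1 \<Rightarrow> 'r::ring_1 \<Rightarrow> 'r" where
  refl: "stl_eq n sm x x"
| sym: "stl_eq n sm x y \<Longrightarrow> stl_eq n sm y x"
| trans: "stl_eq n sm x y \<Longrightarrow> stl_eq n sm y z \<Longrightarrow> stl_eq n sm x z"
| cong_add: "stl_eq n sm x x' \<Longrightarrow> stl_eq n sm y y' \<Longrightarrow> stl_eq n sm (Add x y) (Add x' y')"
| cong_smul: "stl_eq n sm x x' \<Longrightarrow> stl_eq n sm (Smul k x) (Smul k x')"
| cong_br: "stl_eq n sm x x' \<Longrightarrow> stl_eq n sm y y' \<Longrightarrow> stl_eq n sm (Br x y) (Br x' y')"
| add_assoc: "stl_eq n sm (Add (Add x y) z) (Add x (Add y z))"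
| add_comm: "stl_eq n sm (Add x y) (Add y x)"
| add_zero: "stl_eq n sm (Add x Zero) x"
| add_neg: "stl_eq n sm (Add x (Smul (-1) x)) Zero"
| smul_add: "stl_eq n sm (Smul k (Add x y)) (Add (Smul k x) (Smul k y))"
| add_smul: "stl_eq n sm (Smul (k + l) x) (Add (Smul k x) (Smul l x))"
| smul_smul: "stl_eq n sm (Smul (k * l) x) (Smul k (Smul l x))"
| smul_one: "stl_eq n sm (Smul 1 x) x"
| br_add_left: "stl_eq n sm (Br (Add x y) z) (Add (Br x z) (Br y z))"
| br_add_right: "stl_eq n sm (Br x (Add y z)) (Add (Br x y) (Br x z))"
| br_smul_left: "stl_eq n sm (Br (Smul k x) y) (Smul k (Br x y))"
| br_smul_right: "stl_eq n sm (Br x (Smul k y)) (Smul k (Br x y))"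
| leibniz: "stl_eq n sm (Br x (Br y z)) (Add (Br (Br x y) z) (Smul (-1) (Br (Br x z) y)))"
| gen_lin: "valid_idx n i \<Longrightarrow> valid_idx n j \<Longrightarrow> i \<noteq> j \<Longrightarrow>
     stl_eq n sm (Gen i j (sm k1 a + sm k2 b)) (Add (Smul k1 (Gen i j a)) (Smul k2 (Gen i j b)))"
| gen_br1: "valid_idx n i \<Longrightarrow> valid_idx n j \<Longrightarrow> valid_idx n k \<Longrightarrow>
     i \<noteq> j \<Longrightarrow> j \<noteq> k \<Longrightarrow> i \<noteq> k \<Longrightarrow>
     stl_eq n sm (Br (Gen i j a) (Gen j k b)) (Gen i k (a * b))"
| gen_br2: "valid_idx n i \<Longrightarrow> valid_idx n j \<Longrightarrow> valid_idx n k \<Longrightarrow>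
     i \<noteq> j \<Longrightarrow> j \<noteq> k \<Longrightarrow> i \<noteq> k \<Longrightarrow>
     stl_eq n sm (Br (Gen i j a) (Gen k i b)) (Smul (-1) (Gen k j (b * a)))"
| gen_br0: "valid_idx n i \<Longrightarrow> valid_idx n j \<Longrightarrow> valid_idx n k \<Longrightarrow> valid_idx n l \<Longrightarrow>
     i \<noteq> j \<Longrightarrow> k \<noteq> l \<Longrightarrow> j \<noteq> k \<Longrightarrow> i \<noteq> l \<Longrightarrow>
     stl_eq n sm (Br (Gen i j a) (Gen k l b)) Zero"

inductive H_span :: "nat \<Rightarrow> ('k, 'r) expr \<Rightarrow> bool" for n :: nat where
  zero: "H_span n Zero"
| gen: "valid_idx n i \<Longrightarrow> valid_idx n j \<Longrightarrow> i \<noteq> j \<Longrightarrow> H_span n (Br (Gen i j a) (Gen j i b))"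
| add: "H_span n x \<Longrightarrow> H_span n y \<Longrightarrow> H_span n (Add x y)"
| smul: "H_span n x \<Longrightarrow> H_span n (Smul k x)"

definition in_H :: "nat \<Rightarrow> ('k::comm_ring_1 \<Rightarrow> 'r::ring_1 \<Rightarrow> 'r) \<Rightarrow> ('k, 'r) expr \<Rightarrow> bool" where
  "in_H n sm e \<longleftrightarrow> wf_expr n e \<and> (\<exists>h. H_span n h \<and> stl_eq n sm e h)"

definition in_X :: "nat \<Rightarrow> ('k::comm_ring_1 \<Rightarrow> 'r::ring_1 \<Rightarrow> 'r) \<Rightarrow> nat \<Rightarrow> nat \<Rightarrow> ('k, 'r) expr \<Rightarrow> bool" where
  "in_X n sm i j e \<longleftrightarrow> (\<exists>a. stl_eq n sm e (Gen i j a))"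

definition in_center :: "nat \<Rightarrow> ('k::comm_ring_1 \<Rightarrow> 'r::ring_1 \<Rightarrow> 'r) \<Rightarrow> ('k, 'r) expr \<Rightarrow> bool" where
  "in_center n sm z \<longleftrightarrow> wf_expr n z \<and>
     (\<forall>x. wf_expr n x \<longrightarrow> stl_eq n sm (Br z x) Zero \<and> stl_eq n sm (Br x z) Zero)"

definition offdiag :: "nat \<Rightarrow> (nat \<times> nat) list" where
  "offdiag n = [(i, j). i \<leftarrow> [1..<n+1], j \<leftarrow> [1..<n+1], i \<noteq> j]"

definition esum :: "('a \<Rightarrow> ('k, 'r) expr) \<Rightarrow> 'a list \<Rightarrow> ('k, 'r) expr" where
  "esum f xs = foldr (\<lambda>p acc. Add (f p) acc) xs Zero"

end

theory Submission
  imports Defs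
begin

locale stl =
  fixes n :: nat and sm :: "'k::comm_ring_1 \<Rightarrow> 'r::ring_1 \<Rightarrow> 'r"
  assumes alg: "is_K_algebra sm" and n3: "n \<ge> 3"
begin

abbreviation eqv :: "('k,'r) expr \<Rightarrow> ('k,'r) expr \<Rightarrow> bool" (infix "\<simeq>" 50)
  where "x \<simeq> y \<equiv> stl_eq n sm x y"

lemma sm_addr: "sm k (a + b) = sm k a + sm k b" using alg unfolding is_K_algebra_def by blast
lemma sm_addl: "sm (k + l) a = sm k a + sm l a" using alg unfolding is_K_algebra_def by blast
lemma sm_mult: "sm (k * l) a = sm k (sm l a)" using alg unfolding is_K_algebra_def by blast
lemma sm_one: "sm 1 a = a" using alg unfolding is_K_algebra_def by blast
lemma sm_ml: "sm k (a * b) = sm k a * b" using alg unfolding is_K_algebra_def by blast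
lemma sm_mr: "sm k (a * b) = a * sm k b" using alg unfolding is_K_algebra_def by blast
lemma sm_zl: "sm 0 a = 0"
proof -
  have "sm (0+0) a = sm 0 a + sm 0 a" by (rule sm_addl)
  then show ?thesis by simp
qed
lemma sm_zr: "sm k 0 = 0"
proof -
  have "sm k (0+0) = sm k 0 + sm k 0" by (rule sm_addr)
  then show ?thesis by simp
qed
lemma sm_neg1: "sm (-1) a = - a"
proof -
  have "sm ((-1)+1) a = sm (-1) a + sm 1 a" by (rule sm_addl)
  then have "0 = sm (-1) a + a" by (simp add: sm_zl sm_one)
  then show ?thesis by (simp add: eq_neg_iff_add_eq_0)
qed
lemma sm_diff: "sm k (a - b) = sm k a - sm k b"
proof -
  have "sm k ((a - b) + b) = sm k (a - b) + sm k b" by (rule sm_addr)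
  then show ?thesis by (simp add: algebra_simps)
qed
lemma sm_sum: "sm k (sum f A) = sum (\<lambda>x. sm k (f x)) A"
  by (induction A rule: infinite_finite_induct) (auto simp: sm_zr sm_addr)

lemma r: "x \<simeq> x" by (rule stl_eq.refl)
lemma s: "x \<simeq> y \<Longrightarrow> y \<simeq> x" by (rule stl_eq.sym)
lemmas t[trans] = stl_eq.trans[of n sm]
lemma cadd: "x \<simeq> x' \<Longrightarrow> y \<simeq> y' \<Longrightarrow> Add x y \<simeq> Add x' y'" by (rule stl_eq.cong_add)
lemma caddl: "x \<simeq> x' \<Longrightarrow> Add x y \<simeq> Add x' y" using cadd r by blast
lemma caddr: "y \<simeq> y' \<Longrightarrow> Add x y \<simeq> Add x y'" using cadd r by blast
lemma csmul: "x \<simeq> x' \<Longrightarrow> Smul k x \<simeq> Smul k x'" by (rule stl_eq.cong_smul)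
lemma cbr: "x \<simeq> x' \<Longrightarrow> y \<simeq> y' \<Longrightarrow> Br x y \<simeq> Br x' y'" by (rule stl_eq.cong_br)
lemma cbrl: "x \<simeq> x' \<Longrightarrow> Br x y \<simeq> Br x' y" using cbr r by blast
lemma cbrr: "y \<simeq> y' \<Longrightarrow> Br x y \<simeq> Br x y'" using cbr r by blast

lemma smul0: "Smul 0 x \<simeq> Zero"
proof -
  let ?y = "Smul 0 x"
  have 1: "?y \<simeq> Add ?y ?y" using stl_eq.add_smul[of n sm 0 0 x] by simp
  have "Zero \<simeq> Add ?y (Smul (-1) ?y)" by (rule s[OF stl_eq.add_neg])
  also have "\<dots> \<simeq> Add (Add ?y ?y) (Smul (-1) ?y)" by (rule caddl[OF 1])
  also have "\<dots> \<simeq> Add ?y (Add ?y (Smul (-1) ?y))" by (rule stl_eq.add_assoc)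
  also have "\<dots> \<simeq> Add ?y Zero" by (rule caddr[OF stl_eq.add_neg])
  also have "\<dots> \<simeq> ?y" by (rule stl_eq.add_zero)
  finally show ?thesis by (rule s)
qed

lemma zero_add: "Add Zero x \<simeq> x"
  using t[OF stl_eq.add_comm stl_eq.add_zero] .

lemma smul_zero: "Smul k Zero \<simeq> Zero"
proof -
  have "Smul k Zero \<simeq> Smul k (Smul 0 Zero)" by (rule csmul[OF s[OF smul0]])
  also have "\<dots> \<simeq> Smul (k*0) Zero" by (rule s[OF stl_eq.smul_smul])
  also have "\<dots> \<simeq> Zero" using smul0 by simp
  finally show ?thesis .
qed

lemma br_zero_r: "Br x Zero \<simeq> Zero"
proof -
  have "Br x Zero \<simeq> Br x (Smul 0 Zero)" by (rule cbrr[OF s[OF smul0]])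
  also have "\<dots> \<simeq> Smul 0 (Br x Zero)" by (rule stl_eq.br_smul_right)
  also have "\<dots> \<simeq> Zero" by (rule smul0)
  finally show ?thesis .
qed

lemma br_zero_l: "Br Zero x \<simeq> Zero"
proof -
  have "Br Zero x \<simeq> Br (Smul 0 Zero) x" by (rule cbrl[OF s[OF smul0]])
  also have "\<dots> \<simeq> Smul 0 (Br Zero x)" by (rule stl_eq.br_smul_left)
  also have "\<dots> \<simeq> Zero" by (rule smul0)
  finally show ?thesis .
qed

definition vp :: "nat \<Rightarrow> nat \<Rightarrow> bool" where
  "vp i j \<longleftrightarrow> valid_idx n i \<and> valid_idx n j \<and> i \<noteq> j"

lemma gen_smul: "vp i j \<Longrightarrow> Smul k (Gen i j u) \<simeq> Gen i j (sm k u)"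
proof -
  assume v: "vp i j"
  have "Gen i j (sm k u + sm 0 u) \<simeq> Add (Smul k (Gen i j u)) (Smul 0 (Gen i j u))"
    using v unfolding vp_def by (blast intro: stl_eq.gen_lin)
  also have "\<dots> \<simeq> Add (Smul k (Gen i j u)) Zero" by (rule caddr[OF smul0])
  also have "\<dots> \<simeq> Smul k (Gen i j u)" by (rule stl_eq.add_zero)
  finally show ?thesis by (simp add: sm_zl s)
qed

lemma gen_add: "vp i j \<Longrightarrow> Add (Gen i j u) (Gen i j v) \<simeq> Gen i j (u + v)"
proof -
  assume v: "vp i j"
  have "Gen i j (sm 1 u + sm 1 v) \<simeq> Add (Smul 1 (Gen i j u)) (Smul 1 (Gen i j v))"
    using v unfolding vp_def by (blast intro: stl_eq.gen_lin)
  also have "\<dots> \<simeq> Add (Gen i j u) (Gen i j v)" by (rule cadd[OF stl_eq.smul_one stl_eq.smul_one])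
  finally show ?thesis by (simp add: sm_one s)
qed

lemma gen_zero: "vp i j \<Longrightarrow> Gen i j 0 \<simeq> Zero"
  using t[OF s[OF gen_smul[of i j 0 0]] smul0] by (simp add: sm_zl)

lemma add_swap: "Add (Add a b) (Add c d) \<simeq> Add (Add a c) (Add b d)"
proof -
  have "Add (Add a b) (Add c d) \<simeq> Add a (Add b (Add c d))" by (rule stl_eq.add_assoc)
  also have "\<dots> \<simeq> Add a (Add (Add b c) d)" by (rule caddr[OF s[OF stl_eq.add_assoc]])
  also have "\<dots> \<simeq> Add a (Add (Add c b) d)" by (rule caddr[OF caddl[OF stl_eq.add_comm]])
  also have "\<dots> \<simeq> Add a (Add c (Add b d))" by (rule caddr[OF stl_eq.add_assoc])
  also have "\<dots> \<simeq> Add (Add a c) (Add b d)" by (rule s[OF stl_eq.add_assoc])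
  finally show ?thesis .
qed

lemma neg_neg: "Smul (-1) (Smul (-1) x) \<simeq> x"
proof -
  have "Smul (-1) (Smul (-1) x) \<simeq> Smul ((-1)*(-1)) x" by (rule s[OF stl_eq.smul_smul])
  also have "\<dots> \<simeq> x" using stl_eq.smul_one by simp
  finally show ?thesis .
qed

lemma leib_inv: "A \<simeq> Add B (Smul (-1) C) \<Longrightarrow> B \<simeq> Add A C"
proof -
  assume h: "A \<simeq> Add B (Smul (-1) C)"
  have "Add A C \<simeq> Add (Add B (Smul (-1) C)) C" by (rule caddl[OF h])
  also have "\<dots> \<simeq> Add B (Add (Smul (-1) C) C)" by (rule stl_eq.add_assoc)
  also have "\<dots> \<simeq> Add B (Add C (Smul (-1) C))" by (rule caddr[OF stl_eq.add_comm])
  also have "\<dots> \<simeq> Add B Zero" by (rule caddr[OF stl_eq.add_neg])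
  also have "\<dots> \<simeq> B" by (rule stl_eq.add_zero)
  finally show ?thesis by (rule s)
qed

lemma rder: "Br (Br x y) z \<simeq> Add (Br x (Br y z)) (Br (Br x z) y)"
  by (rule leib_inv[OF stl_eq.leibniz])

end

context stl begin

definition mm :: "(nat\<Rightarrow>nat\<Rightarrow>'r) \<Rightarrow> (nat\<Rightarrow>nat\<Rightarrow>'r) \<Rightarrow> nat\<Rightarrow>nat\<Rightarrow>'r" where
  "mm A B = (\<lambda>p q. \<Sum>r\<in>{1..n}. A p r * B r q)"
definition cm :: "(nat\<Rightarrow>nat\<Rightarrow>'r) \<Rightarrow> (nat\<Rightarrow>nat\<Rightarrow>'r) \<Rightarrow> nat\<Rightarrow>nat\<Rightarrow>'r" where
  "cm A B = (\<lambda>p q. mm A B p q - mm B A p q)"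

fun ev :: "('k,'r) expr \<Rightarrow> nat \<Rightarrow> nat \<Rightarrow> 'r" where
  "ev (Gen i j a) = (\<lambda>p q. if p = i \<and> q = j then a else 0)"
| "ev Zero = (\<lambda>p q. 0)"
| "ev (Add x y) = (\<lambda>p q. ev x p q + ev y p q)"
| "ev (Smul k x) = (\<lambda>p q. sm k (ev x p q))"
| "ev (Br x y) = cm (ev x) (ev y)"

lemma mm_assoc: "mm (mm A B) C = mm A (mm B C)"
  unfolding mm_def
  by (auto simp: sum_distrib_left sum_distrib_right mult.assoc intro!: ext sum.swap)

lemma mm_diffr: "mm A (\<lambda>p q. B p q - C p q) = (\<lambda>p q. mm A B p q - mm A C p q)"
  unfolding mm_def by (auto simp: right_diff_distrib sum_subtractf)
lemma mm_diffl: "mm (\<lambda>p q. B p q - C p q) A = (\<lambda>p q. mm B A p q - mm C A p q)"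
  unfolding mm_def by (auto simp: left_diff_distrib sum_subtractf)
lemma mm_addr: "mm A (\<lambda>p q. B p q + C p q) = (\<lambda>p q. mm A B p q + mm A C p q)"
  unfolding mm_def by (auto simp: distrib_left sum.distrib)
lemma mm_addl: "mm (\<lambda>p q. B p q + C p q) A = (\<lambda>p q. mm B A p q + mm C A p q)"
  unfolding mm_def by (auto simp: distrib_right sum.distrib)
lemma mm_smr: "mm A (\<lambda>p q. sm k (B p q)) = (\<lambda>p q. sm k (mm A B p q))"
  unfolding mm_def by (auto simp: sm_sum sm_mr)
lemma mm_sml: "mm (\<lambda>p q. sm k (B p q)) A = (\<lambda>p q. sm k (mm B A p q))"
  unfolding mm_def by (auto simp: sm_sum sm_ml)

lemma mm_gen: "mm (\<lambda>p q. if p = i \<and> q = j then a else 0) (\<lambda>p q. if p = k \<and> q = l then b else 0)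
   = (\<lambda>p q. if p = i \<and> q = l \<and> j = k \<and> valid_idx n j then a * b else 0)"
proof (intro ext)
  fix p q
  have "(\<Sum>r\<in>{1..n}. (if p = i \<and> r = j then a else 0) * (if r = k \<and> q = l then b else 0))
     = (\<Sum>r\<in>{1..n}. if r = j then (if p = i \<and> j = k \<and> q = l then a * b else 0) else 0)"
    by (rule sum.cong) auto
  also have "\<dots> = (if p = i \<and> q = l \<and> j = k \<and> valid_idx n j then a * b else 0)"
    by (auto simp: valid_idx_def)
  finally show "mm (\<lambda>p q. if p = i \<and> q = j then a else 0) (\<lambda>p q. if p = k \<and> q = l then b else 0) p q
   = (if p = i \<and> q = l \<and> j = k \<and> valid_idx n j then a * b else 0)" unfolding mm_def .
qed

lemma ev_sound: "x \<simeq> y \<Longrightarrow> ev x = ev y"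
proof (induction rule: stl_eq.induct)
  case (add_neg x) then show ?case by (auto simp: sm_neg1)
next
  case (smul_add k x y) then show ?case by (auto simp: sm_addr)
next
  case (add_smul k l x) then show ?case by (auto simp: sm_addl)
next
  case (smul_smul k l x) then show ?case by (auto simp: sm_mult)
next
  case (smul_one x) then show ?case by (auto simp: sm_one)
next
  case (br_add_left x y z) then show ?case by (auto simp: cm_def mm_addl mm_addr algebra_simps)
next
  case (br_add_right x y z) then show ?case by (auto simp: cm_def mm_addl mm_addr algebra_simps)
next
  case (br_smul_left k x y) then show ?case by (auto simp: cm_def mm_sml mm_smr sm_diff)
next
  case (br_smul_right k x y) then show ?case by (auto simp: cm_def mm_sml mm_smr sm_diff)
next
  case (leibniz x y z) then show ?case
    by (auto simp: cm_def mm_diffl mm_diffr mm_assoc sm_neg1 algebra_simps)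
next
  case (gen_lin i j k1 a k2 b) then show ?case by (auto simp: sm_zr intro!: ext)
next
  case (gen_br1 i j k a b) then show ?case by (auto simp: cm_def mm_gen)
next
  case (gen_br2 i j k a b) then show ?case by (auto simp: cm_def mm_gen sm_neg1)
next
  case (gen_br0 i j k l a b) then show ?case by (auto simp: cm_def mm_gen)
qed (auto simp: algebra_simps)

end

context stl begin

lemma esum_Nil[simp]: "esum f [] = Zero" by (simp add: esum_def)
lemma esum_Cons[simp]: "esum f (x # xs) = Add (f x) (esum f xs)" by (simp add: esum_def)

lemma esum_cong: "(\<And>p. p \<in> set xs \<Longrightarrow> f p \<simeq> g p) \<Longrightarrow> esum f xs \<simeq> esum g xs"
  by (induction xs) (auto intro: r cadd)

lemma esum_add: "esum (\<lambda>p. Add (f p) (g p)) xs \<simeq> Add (esum f xs) (esum g xs)"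
proof (induction xs)
  case Nil then show ?case by (simp add: s stl_eq.add_zero)
next
  case (Cons x xs)
  have "esum (\<lambda>p. Add (f p) (g p)) (x # xs) \<simeq> Add (Add (f x) (g x)) (Add (esum f xs) (esum g xs))"
    using caddr[OF Cons.IH] by simp
  also have "\<dots> \<simeq> Add (Add (f x) (esum f xs)) (Add (g x) (esum g xs))" by (rule add_swap)
  finally show ?case by simp
qed

lemma esum_smul: "esum (\<lambda>p. Smul k (f p)) xs \<simeq> Smul k (esum f xs)"
proof (induction xs)
  case Nil then show ?case by (simp add: s smul_zero)
next
  case (Cons x xs)
  have "esum (\<lambda>p. Smul k (f p)) (x # xs) \<simeq> Add (Smul k (f x)) (Smul k (esum f xs))"
    using caddr[OF Cons.IH] by simp
  also have "\<dots> \<simeq> Smul k (Add (f x) (esum f xs))" by (rule s[OF stl_eq.smul_add])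
  finally show ?case by simp
qed

lemma esum_zero: "(\<And>p. p \<in> set xs \<Longrightarrow> f p \<simeq> Zero) \<Longrightarrow> esum f xs \<simeq> Zero"
proof (induction xs)
  case Nil then show ?case by (simp add: r)
next
  case (Cons x xs)
  have "esum f (x # xs) \<simeq> Add Zero Zero" using Cons by (auto intro: cadd)
  also have "\<dots> \<simeq> Zero" by (rule stl_eq.add_zero)
  finally show ?case .
qed

lemma esum_br: "Br (esum f xs) y \<simeq> esum (\<lambda>p. Br (f p) y) xs"
proof (induction xs)
  case Nil then show ?case by (simp add: br_zero_l)
next
  case (Cons x xs)
  have "Br (esum f (x # xs)) y \<simeq> Add (Br (f x) y) (Br (esum f xs) y)"
    using stl_eq.br_add_left by simp
  also have "\<dots> \<simeq> Add (Br (f x) y) (esum (\<lambda>p. Br (f p) y) xs)" by (rule caddr[OF Cons.IH])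
  finally show ?case by simp
qed

lemma esum_single: "distinct xs \<Longrightarrow> q \<in> set xs \<Longrightarrow> (\<And>p. p \<in> set xs \<Longrightarrow> p \<noteq> q \<Longrightarrow> f p \<simeq> Zero)
   \<Longrightarrow> esum f xs \<simeq> f q"
proof (induction xs)
  case Nil then show ?case by simp
next
  case (Cons x xs)
  show ?case
  proof (cases "x = q")
    case True
    have "esum f xs \<simeq> Zero" using Cons True by (auto intro: esum_zero)
    then have "esum f (x # xs) \<simeq> Add (f q) Zero" using True by (auto intro: caddr)
    then show ?thesis using t stl_eq.add_zero by blast
  next
    case False
    have "esum f (x # xs) \<simeq> Add Zero (f q)" using Cons False by (auto intro: cadd)
    then show ?thesis using t zero_add by blast
  qed
qed

lemma set_offdiag: "p \<in> set (offdiag n) \<longleftrightarrow> vp (fst p) (snd p)"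
  by (cases p) (auto simp: offdiag_def vp_def valid_idx_def)

lemma distinct_offdiag: "distinct (offdiag n)"
  unfolding offdiag_def by (auto intro!: distinct_concat simp: distinct_map inj_on_def)

abbreviation SS :: "(nat \<Rightarrow> nat \<Rightarrow> 'r) \<Rightarrow> ('k,'r) expr" where
  "SS a \<equiv> esum (\<lambda>(i, j). Gen i j (a i j)) (offdiag n)"

lemma S_add: "Add (SS a) (SS b) \<simeq> SS (\<lambda>i j. a i j + b i j)"
proof -
  have "Add (SS a) (SS b) \<simeq> esum (\<lambda>p. Add ((\<lambda>(i, j). Gen i j (a i j)) p) ((\<lambda>(i, j). Gen i j (b i j)) p)) (offdiag n)"
    by (rule s[OF esum_add])
  also have "\<dots> \<simeq> SS (\<lambda>i j. a i j + b i j)"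
    by (rule esum_cong) (auto simp: set_offdiag intro: gen_add)
  finally show ?thesis .
qed

lemma S_smul: "Smul k (SS a) \<simeq> SS (\<lambda>i j. sm k (a i j))"
proof -
  have "Smul k (SS a) \<simeq> esum (\<lambda>p. Smul k ((\<lambda>(i, j). Gen i j (a i j)) p)) (offdiag n)"
    by (rule s[OF esum_smul])
  also have "\<dots> \<simeq> SS (\<lambda>i j. sm k (a i j))"
    by (rule esum_cong) (auto simp: set_offdiag intro: gen_smul)
  finally show ?thesis .
qed

lemma S_zero: "(\<And>i j. vp i j \<Longrightarrow> a i j = 0) \<Longrightarrow> SS a \<simeq> Zero"
  by (rule esum_zero) (auto simp: set_offdiag intro: gen_zero)

lemma S_single: "vp i j \<Longrightarrow> SS (\<lambda>p q. if p = i \<and> q = j then c else 0) \<simeq> Gen i j c"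
  using esum_single[OF distinct_offdiag, of "(i,j)" "\<lambda>(p, q). Gen p q (if p = i \<and> q = j then c else 0)"]
proof -
  assume v: "vp i j"
  have "\<And>a b. vp a b \<Longrightarrow> (a = i \<longrightarrow> b \<noteq> j) \<Longrightarrow> Gen a b (if a = i \<and> b = j then c else 0) \<simeq> Zero"
    using gen_zero by auto
  then show ?thesis using v esum_single[OF distinct_offdiag, of "(i,j)" "\<lambda>(p, q). Gen p q (if p = i \<and> q = j then c else 0)"]
    by (auto simp: set_offdiag)
qed

end

context stl begin

definition isX :: "nat \<Rightarrow> nat \<Rightarrow> ('k,'r) expr \<Rightarrow> bool" where
  "isX k l e \<longleftrightarrow> (\<exists>c. e \<simeq> Gen k l c)"

lemma isX_gen: "isX k l (Gen k l c)" unfolding isX_def using r by blast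
lemma isX_cong: "e \<simeq> e' \<Longrightarrow> isX k l e' \<Longrightarrow> isX k l e" unfolding isX_def using t by blast
lemma isX_zero: "vp k l \<Longrightarrow> e \<simeq> Zero \<Longrightarrow> isX k l e"
  unfolding isX_def using t s[OF gen_zero] by blast
lemma isX_add: "vp k l \<Longrightarrow> isX k l x \<Longrightarrow> isX k l y \<Longrightarrow> isX k l (Add x y)"
  unfolding isX_def using t cadd gen_add by blast
lemma isX_smul: "vp k l \<Longrightarrow> isX k l x \<Longrightarrow> isX k l (Smul c x)"
  unfolding isX_def using t csmul gen_smul by blast

lemma G1: "vp i j \<Longrightarrow> vp j k \<Longrightarrow> vp i k \<Longrightarrow> Br (Gen i j a) (Gen j k b) \<simeq> Gen i k (a * b)"
  unfolding vp_def by (blast intro: stl_eq.gen_br1)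
lemma G2: "vp i j \<Longrightarrow> vp k i \<Longrightarrow> vp k j \<Longrightarrow> Br (Gen i j a) (Gen k i b) \<simeq> Gen k j (- (b * a))"
proof -
  assume v: "vp i j" "vp k i" "vp k j"
  have "Br (Gen i j a) (Gen k i b) \<simeq> Smul (-1) (Gen k j (b * a))"
    using v unfolding vp_def by (blast intro: stl_eq.gen_br2)
  also have "\<dots> \<simeq> Gen k j (sm (-1) (b * a))" by (rule gen_smul[OF v(3)])
  finally show ?thesis by (simp add: sm_neg1)
qed
lemma G0: "vp i j \<Longrightarrow> vp k l \<Longrightarrow> j \<noteq> k \<Longrightarrow> i \<noteq> l \<Longrightarrow> Br (Gen i j a) (Gen k l b) \<simeq> Zero"
  unfolding vp_def by (blast intro: stl_eq.gen_br0)

lemma vp_sym: "vp i j \<Longrightarrow> vp j i" unfolding vp_def by auto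

lemma core1:
  assumes ij: "vp i j" and kl: "vp k l" and d1: "\<not> (k = i \<and> l = j)" and d2: "\<not> (k = j \<and> l = i)"
  shows "isX k l (Br (Br (Gen i j a) (Gen j i b)) (Gen k l c))"
proof -
  let ?X = "Gen i j a" and ?Y = "Gen j i b" and ?Z = "Gen k l c"
  have red: "Br (Br ?X ?Y) ?Z \<simeq> Add (Br ?X (Br ?Y ?Z)) (Br (Br ?X ?Z) ?Y)" by (rule rder)
  have vi: "valid_idx n i" "valid_idx n j" "valid_idx n k" "valid_idx n l" "i \<noteq> j" "k \<noteq> l"
    using ij kl unfolding vp_def by auto
  have ji: "vp j i" using vp_sym[OF ij] .
  have vpI: "\<And>p q. valid_idx n p \<Longrightarrow> valid_idx n q \<Longrightarrow> p \<noteq> q \<Longrightarrow> vp p q" unfolding vp_def by auto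
  have A: "isX k l (Br ?X (Br ?Y ?Z))" and Bq: "isX k l (Br (Br ?X ?Z) ?Y)"
  proof -
    consider (a) "k \<noteq> i" "k \<noteq> j" "l \<noteq> i" "l \<noteq> j" | (b) "k = i" "l \<noteq> i" "l \<noteq> j"
      | (c) "k = j" "l \<noteq> i" "l \<noteq> j" | (d) "l = i" "k \<noteq> i" "k \<noteq> j" | (e) "l = j" "k \<noteq> i" "k \<noteq> j"
      using d1 d2 vi by blast
    then have "isX k l (Br ?X (Br ?Y ?Z)) \<and> isX k l (Br (Br ?X ?Z) ?Y)"
    proof cases
      case a
      have 1: "Br ?X (Br ?Y ?Z) \<simeq> Zero"
        using t[OF cbrr[OF G0[OF ji kl]] br_zero_r] a by blast
      have 2: "Br (Br ?X ?Z) ?Y \<simeq> Zero"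
        using t[OF cbrl[OF G0[OF ij kl]] br_zero_l] a by blast
      show ?thesis using isX_zero[OF kl 1] isX_zero[OF kl 2] by blast
    next
      case b
      have v1: "vp j l" "vp i l" using b vi vpI by auto
      have 1: "Br ?X (Br ?Y ?Z) \<simeq> Gen i l (a * (b * c))"
        using t[OF cbrr[OF G1[OF ji v1(2) v1(1)]] G1[OF ij v1(1) v1(2)]] b by simp
      have 2: "Br (Br ?X ?Z) ?Y \<simeq> Zero"
        using t[OF cbrl[OF G0[OF ij kl]] br_zero_l] b vi by blast
      show ?thesis using isX_cong[OF 1 isX_gen] isX_zero[OF kl 2] b by blast
    next
      case c
      have v1: "vp j l" "vp i l" using c vi vpI by auto
      have 1: "Br ?X (Br ?Y ?Z) \<simeq> Zero"
        using t[OF cbrr[OF G0[OF ji kl]] br_zero_r] c vi by blast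
      have 2: "Br (Br ?X ?Z) ?Y \<simeq> Gen j l (- (b * (a * c)))"
        using t[OF cbrl[OF G1[OF ij v1(1) v1(2)]] G2[OF v1(2) ji v1(1)]] c by simp
      show ?thesis using isX_cong[OF 2 isX_gen] isX_zero[OF kl 1] c by blast
    next
      case d
      have v1: "vp k i" "vp k j" using d vi vpI by auto
      have 1: "Br ?X (Br ?Y ?Z) \<simeq> Zero"
        using t[OF cbrr[OF G0[OF ji kl]] br_zero_r] d vi by blast
      have 2: "Br (Br ?X ?Z) ?Y \<simeq> Gen k i (- (c * a) * b)"
        using t[OF cbrl[OF G2[OF ij v1(1) v1(2)]] G1[OF v1(2) ji v1(1)]] d by simp
      show ?thesis using isX_cong[OF 2 isX_gen] isX_zero[OF kl 1] d by blast
    next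
      case e
      have v1: "vp k i" "vp k j" using e vi vpI by auto
      have 1: "Br ?X (Br ?Y ?Z) \<simeq> Gen k j (- (- (c * b) * a))"
        using t[OF cbrr[OF G2[OF ji v1(2) v1(1)]] G2[OF ij v1(1) v1(2)]] e by simp
      have 2: "Br (Br ?X ?Z) ?Y \<simeq> Zero"
        using t[OF cbrl[OF G0[OF ij kl]] br_zero_l] e vi by blast
      show ?thesis using isX_cong[OF 1 isX_gen] isX_zero[OF kl 2] e by blast
    qed
    then show "isX k l (Br ?X (Br ?Y ?Z))" "isX k l (Br (Br ?X ?Z) ?Y)" by auto
  qed
  show ?thesis using isX_cong[OF red isX_add[OF kl A Bq]] .
qed

lemma core:
  assumes ij: "vp i j" and kl: "vp k l"
  shows "isX k l (Br (Br (Gen i j a) (Gen j i b)) (Gen k l c))"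
proof (cases "(k = i \<and> l = j) \<or> (k = j \<and> l = i)")
  case False then show ?thesis using core1[OF ij kl] by blast
next
  case True
  let ?h = "Br (Gen i j a) (Gen j i b)"
  obtain m where m: "valid_idx n m" "m \<noteq> i" "m \<noteq> j"
  proof -
    have "\<exists>m\<in>{1,2,3::nat}. m \<noteq> i \<and> m \<noteq> j" by auto
    then obtain m where "m \<in> {1,2,3::nat}" "m \<noteq> i" "m \<noteq> j" by blast
    moreover then have "valid_idx n m" using n3 unfolding valid_idx_def by auto
    ultimately show ?thesis using that by blast
  qed
  have vkm: "vp k m" "vp m l" using m True kl unfolding vp_def by auto
  have c1: "isX k m (Br ?h (Gen k m c))" using core1[OF ij vkm(1)] m True by blast
  have c2: "isX m l (Br ?h (Gen m l 1))" using core1[OF ij vkm(2)] m True by blast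
  obtain c1' where e1: "Br ?h (Gen k m c) \<simeq> Gen k m c1'" using c1 unfolding isX_def by blast
  obtain c2' where e2: "Br ?h (Gen m l 1) \<simeq> Gen m l c2'" using c2 unfolding isX_def by blast
  have "Br ?h (Gen k l c) \<simeq> Br ?h (Br (Gen k m c) (Gen m l 1))"
    using cbrr[OF s[OF G1[OF vkm(1) vkm(2) kl, of c 1]], of ?h] by simp
  also have "\<dots> \<simeq> Add (Br (Br ?h (Gen k m c)) (Gen m l 1)) (Smul (-1) (Br (Br ?h (Gen m l 1)) (Gen k m c)))"
    by (rule stl_eq.leibniz)
  finally have red: "Br ?h (Gen k l c) \<simeq> \<dots>" .
  have A: "isX k l (Br (Br ?h (Gen k m c)) (Gen m l 1))"
    using isX_cong[OF t[OF cbrl[OF e1] G1[OF vkm(1) vkm(2) kl]] isX_gen] .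
  have Bq: "isX k l (Br (Br ?h (Gen m l 1)) (Gen k m c))"
    using isX_cong[OF t[OF cbrl[OF e2] G2[OF vkm(2) vkm(1) kl]] isX_gen] .
  show ?thesis using isX_cong[OF red isX_add[OF kl A isX_smul[OF kl Bq]]] .
qed

lemma HX: "H_span n h \<Longrightarrow> vp k l \<Longrightarrow> isX k l (Br h (Gen k l c))"
proof (induction rule: H_span.induct)
  case zero then show ?case using isX_zero br_zero_l by blast
next
  case (gen i j a b) then show ?case using core vp_def by blast
next
  case (add x y) then show ?case using isX_cong[OF stl_eq.br_add_left isX_add] by blast
next
  case (smul x k') then show ?case using isX_cong[OF stl_eq.br_smul_left isX_smul] by blast
qed

end

context stl begin

definition NN :: "('k,'r) expr \<Rightarrow> bool" where
  "NN x \<longleftrightarrow> (\<exists>h a. H_span n h \<and> x \<simeq> Add h (SS a))"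

lemma NN_I: "H_span n h \<Longrightarrow> x \<simeq> Add h (SS a) \<Longrightarrow> NN x"
  unfolding NN_def by blast

lemma N_cong: "x \<simeq> y \<Longrightarrow> NN y \<Longrightarrow> NN x"
proof -
  assume xy: "x \<simeq> y" and "NN y"
  then obtain h a where "H_span n h" "y \<simeq> Add h (SS a)" unfolding NN_def by blast
  then show ?thesis using t[OF xy] NN_I by blast
qed

lemma N_H: "H_span n h \<Longrightarrow> NN h"
proof -
  assume hs: "H_span n h"
  have "h \<simeq> Add h Zero" by (rule s[OF stl_eq.add_zero])
  also have "\<dots> \<simeq> Add h (SS (\<lambda>i j. 0))" by (rule caddr[OF s[OF S_zero]]) simp
  finally show ?thesis by (rule NN_I[OF hs])
qed

lemma N_zero: "NN Zero" by (rule N_H[OF H_span.zero])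

lemma N_gen: "vp i j \<Longrightarrow> NN (Gen i j c)"
proof -
  assume v: "vp i j"
  have "Gen i j c \<simeq> SS (\<lambda>p q. if p = i \<and> q = j then c else 0)" by (rule s[OF S_single[OF v]])
  also have "\<dots> \<simeq> Add Zero \<dots>" by (rule s[OF zero_add])
  finally show ?thesis by (rule NN_I[OF H_span.zero])
qed

lemma N_add: "NN x \<Longrightarrow> NN y \<Longrightarrow> NN (Add x y)"
proof -
  assume "NN x" "NN y"
  then obtain h1 a1 h2 a2 where h: "H_span n h1" "x \<simeq> Add h1 (SS a1)" "H_span n h2" "y \<simeq> Add h2 (SS a2)"
    unfolding NN_def by blast
  have "Add x y \<simeq> Add (Add h1 (SS a1)) (Add h2 (SS a2))" by (rule cadd[OF h(2) h(4)])
  also have "\<dots> \<simeq> Add (Add h1 h2) (Add (SS a1) (SS a2))" by (rule add_swap)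
  also have "\<dots> \<simeq> Add (Add h1 h2) (SS (\<lambda>i j. a1 i j + a2 i j))" by (rule caddr[OF S_add])
  finally show ?thesis by (rule NN_I[OF H_span.add[OF h(1) h(3)]])
qed

lemma N_smul: "NN x \<Longrightarrow> NN (Smul k x)"
proof -
  assume "NN x"
  then obtain h1 a1 where h: "H_span n h1" "x \<simeq> Add h1 (SS a1)" unfolding NN_def by blast
  have "Smul k x \<simeq> Smul k (Add h1 (SS a1))" by (rule csmul[OF h(2)])
  also have "\<dots> \<simeq> Add (Smul k h1) (Smul k (SS a1))" by (rule stl_eq.smul_add)
  also have "\<dots> \<simeq> Add (Smul k h1) (SS (\<lambda>i j. sm k (a1 i j)))" by (rule caddr[OF S_smul])
  finally show ?thesis by (rule NN_I[OF H_span.smul[OF h(1)]])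
qed

lemma N_esum: "(\<And>p. p \<in> set xs \<Longrightarrow> NN (f p)) \<Longrightarrow> NN (esum f xs)"
  by (induction xs) (auto intro: N_zero N_add)

lemma N_gengen: "vp i j \<Longrightarrow> vp k l \<Longrightarrow> NN (Br (Gen i j u) (Gen k l c))"
proof -
  assume ij: "vp i j" and kl: "vp k l"
  have vi: "valid_idx n i" "valid_idx n j" "valid_idx n k" "valid_idx n l" "i \<noteq> j" "k \<noteq> l"
    using ij kl unfolding vp_def by auto
  have vpI: "\<And>p q. valid_idx n p \<Longrightarrow> valid_idx n q \<Longrightarrow> p \<noteq> q \<Longrightarrow> vp p q" unfolding vp_def by auto
  show ?thesis
  proof (cases "j = k")
    case jk: True
    show ?thesis
    proof (cases "i = l")
      case True
      have "H_span n (Br (Gen i j u) (Gen j i c))" using vi by (intro H_span.gen) auto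
      then show ?thesis using jk True N_H by simp
    next
      case False
      have v1: "vp j l" "vp i l" using vi jk False vpI by auto
      have "Br (Gen i j u) (Gen j l c) \<simeq> Gen i l (u * c)" by (rule G1[OF ij v1])
      then show ?thesis using jk N_cong[OF _ N_gen[OF v1(2)]] by simp
    qed
  next
    case jk: False
    show ?thesis
    proof (cases "i = l")
      case True
      have v1: "vp k i" "vp k j" using vi jk True vpI by auto
      have "Br (Gen i j u) (Gen k i c) \<simeq> Gen k j (- (c * u))" by (rule G2[OF ij v1])
      then show ?thesis using True N_cong[OF _ N_gen[OF v1(2)]] by simp
    next
      case False
      show ?thesis by (rule N_cong[OF G0[OF ij kl jk False] N_zero])
    qed
  qed
qed

lemma N_brgen: "NN x \<Longrightarrow> vp k l \<Longrightarrow> NN (Br x (Gen k l c))"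
proof -
  assume "NN x" and kl: "vp k l"
  then obtain h1 a1 where h: "H_span n h1" "x \<simeq> Add h1 (SS a1)" unfolding NN_def by blast
  let ?g = "Gen k l c"
  have "Br x ?g \<simeq> Br (Add h1 (SS a1)) ?g" by (rule cbrl[OF h(2)])
  also have "\<dots> \<simeq> Add (Br h1 ?g) (Br (SS a1) ?g)" by (rule stl_eq.br_add_left)
  also have "\<dots> \<simeq> Add (Br h1 ?g) (esum (\<lambda>p. Br ((\<lambda>(i, j). Gen i j (a1 i j)) p) ?g) (offdiag n))"
    by (rule caddr[OF esum_br])
  finally have red: "Br x ?g \<simeq> \<dots>" .
  obtain c' where "Br h1 ?g \<simeq> Gen k l c'" using HX[OF h(1) kl] unfolding isX_def by blast
  then have 1: "NN (Br h1 ?g)" by (rule N_cong[OF _ N_gen[OF kl]])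
  have 2: "NN (esum (\<lambda>p. Br ((\<lambda>(i, j). Gen i j (a1 i j)) p) ?g) (offdiag n))"
    by (rule N_esum) (auto simp: set_offdiag intro!: N_gengen kl)
  show ?thesis using N_cong[OF red N_add[OF 1 2]] .
qed

lemma N_br: "wf_expr n y \<Longrightarrow> NN x \<Longrightarrow> NN (Br x y)"
proof (induction y arbitrary: x)
  case (Gen i j a) then show ?case using N_brgen vp_def valid_idx_def by auto
next
  case Zero then show ?case using N_cong[OF br_zero_r N_zero] by blast
next
  case (Add y1 y2) then show ?case using N_cong[OF stl_eq.br_add_right N_add] by auto
next
  case (Smul k y) then show ?case using N_cong[OF stl_eq.br_smul_right N_smul] by auto
next
  case (Br y1 y2)
  have w: "wf_expr n y1" "wf_expr n y2" using Br.prems by auto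
  have 1: "NN (Br (Br x y1) y2)" by (rule Br.IH(2)[OF w(2) Br.IH(1)[OF w(1) Br.prems(2)]])
  have 2: "NN (Br (Br x y2) y1)" by (rule Br.IH(1)[OF w(1) Br.IH(2)[OF w(2) Br.prems(2)]])
  show ?case by (rule N_cong[OF stl_eq.leibniz N_add[OF 1 N_smul[OF 2]]])
qed

lemma N_all: "wf_expr n e \<Longrightarrow> NN e"
  by (induction e) (auto intro: N_gen N_zero N_add N_smul N_br simp: vp_def valid_idx_def)

lemma HH: "H_span n y \<Longrightarrow> H_span n hx \<Longrightarrow> x \<simeq> hx \<Longrightarrow> \<exists>h. H_span n h \<and> Br x y \<simeq> h"
proof (induction rule: H_span.induct)
  case zero show ?case by (rule exI[of _ Zero], rule conjI[OF H_span.zero br_zero_r])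
next
  case (add y1 y2)
  then obtain h1 h2 where "H_span n h1" "Br x y1 \<simeq> h1" "H_span n h2" "Br x y2 \<simeq> h2" by blast
  then have "Br x (Add y1 y2) \<simeq> Add h1 h2" using t[OF stl_eq.br_add_right cadd] by blast
  then show ?case using H_span.add[OF \<open>H_span n h1\<close> \<open>H_span n h2\<close>] by blast
next
  case (smul y1 k)
  then obtain h1 where "H_span n h1" "Br x y1 \<simeq> h1" by blast
  then have "Br x (Smul k y1) \<simeq> Smul k h1" using t[OF stl_eq.br_smul_right csmul] by blast
  then show ?case using H_span.smul[OF \<open>H_span n h1\<close>] by blast
next
  case (gen k l c d)
  have kl: "vp k l" "vp l k" using gen unfolding vp_def by auto
  obtain c1 where e1: "Br hx (Gen k l c) \<simeq> Gen k l c1" using HX[OF gen(4) kl(1)] unfolding isX_def by blast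
  obtain d1 where e2: "Br hx (Gen l k d) \<simeq> Gen l k d1" using HX[OF gen(4) kl(2)] unfolding isX_def by blast
  have "Br x (Br (Gen k l c) (Gen l k d)) \<simeq> Add (Br (Br x (Gen k l c)) (Gen l k d)) (Smul (-1) (Br (Br x (Gen l k d)) (Gen k l c)))"
    by (rule stl_eq.leibniz)
  also have "\<dots> \<simeq> Add (Br (Gen k l c1) (Gen l k d)) (Smul (-1) (Br (Gen l k d1) (Gen k l c)))"
    using cadd[OF cbrl[OF t[OF cbrl[OF gen(5)] e1]] csmul[OF cbrl[OF t[OF cbrl[OF gen(5)] e2]]]] .
  finally have fin: "Br x (Br (Gen k l c) (Gen l k d)) \<simeq> Add (Br (Gen k l c1) (Gen l k d)) (Smul (-1) (Br (Gen l k d1) (Gen k l c)))" .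
  have "H_span n (Add (Br (Gen k l c1) (Gen l k d)) (Smul (-1) (Br (Gen l k d1) (Gen k l c))))"
    using gen(1,2,3) by (intro H_span.add H_span.smul H_span.gen) auto
  then show ?case using fin by blast
qed

lemma ev_H: "H_span n h \<Longrightarrow> p \<noteq> q \<Longrightarrow> ev h p q = 0"
  by (induction rule: H_span.induct) (auto simp: cm_def mm_gen sm_zr)

lemma ev_esum: "distinct xs \<Longrightarrow> ev (esum (\<lambda>(i, j). Gen i j (a i j)) xs) p q = (if (p, q) \<in> set xs then a p q else 0)"
  by (induction xs) (auto split: if_splits)

lemma ev_SS: "vp p q \<Longrightarrow> ev (SS a) p q = a p q"
  using ev_esum[OF distinct_offdiag] set_offdiag by auto

lemma direct: "H_span n h' \<Longrightarrow> h \<simeq> h' \<Longrightarrow> Add h (SS a) \<simeq> Zero \<Longrightarrow>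
  h \<simeq> Zero \<and> (\<forall>i j. vp i j \<longrightarrow> Gen i j (a i j) \<simeq> Zero)"
proof -
  assume hs: "H_span n h'" and hh: "h \<simeq> h'" and z: "Add h (SS a) \<simeq> Zero"
  have a0: "a i j = 0" if v: "vp i j" for i j
  proof -
    have "ev (Add h (SS a)) i j = 0" using ev_sound[OF z] by simp
    then show ?thesis using ev_sound[OF hh] ev_H[OF hs] ev_SS[OF v] v unfolding vp_def by auto
  qed
  have g: "\<forall>i j. vp i j \<longrightarrow> Gen i j (a i j) \<simeq> Zero" using a0 gen_zero by auto
  have "h \<simeq> Add h Zero" by (rule s[OF stl_eq.add_zero])
  also have "\<dots> \<simeq> Add h (SS a)" by (rule caddr[OF s[OF S_zero]]) (rule a0)
  also have "\<dots> \<simeq> Zero" by (rule z)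
  finally show ?thesis using g by blast
qed

lemma mm_gen_r: "valid_idx n p \<Longrightarrow> mm A (\<lambda>x y. if x = p \<and> y = q then c else 0) i q = A i p * c"
proof -
  assume v: "valid_idx n p"
  have "(\<Sum>r\<in>{1..n}. A i r * (if r = p \<and> q = q then c else 0)) = (\<Sum>r\<in>{1..n}. if r = p then A i p * c else 0)"
    by (rule sum.cong) auto
  also have "\<dots> = A i p * c" using v by (auto simp: valid_idx_def)
  finally show ?thesis unfolding mm_def .
qed

lemma mm_gen_l: "i \<noteq> p \<Longrightarrow> mm (\<lambda>x y. if x = p \<and> y = q then c else 0) A i q' = 0"
  unfolding mm_def by simp

lemma center: "in_center n sm z \<Longrightarrow> in_H n sm z"
proof -
  assume zc: "in_center n sm z"
  then have wz: "wf_expr n z" unfolding in_center_def by blast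
  obtain h a where h: "H_span n h" "z \<simeq> Add h (SS a)" using N_all[OF wz] unfolding NN_def by blast
  have a0: "a i p = 0" if v: "vp i p" for i p
  proof -
    obtain q where q: "valid_idx n q" "q \<noteq> p"
    proof -
      have "\<exists>q\<in>{1,2::nat}. q \<noteq> p" by auto
      then obtain q where "q \<in> {1,2::nat}" "q \<noteq> p" by blast
      moreover then have "valid_idx n q" using n3 unfolding valid_idx_def by auto
      ultimately show ?thesis using that by blast
    qed
    have vp': "valid_idx n p" "i \<noteq> p" using v unfolding vp_def by auto
    have "wf_expr n (Gen p q 1)" using q vp' unfolding valid_idx_def by auto
    then have "Br z (Gen p q 1) \<simeq> Zero" using zc unfolding in_center_def by blast
    then have "ev (Br z (Gen p q 1)) = ev Zero" by (rule ev_sound)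
    then have "ev (Br z (Gen p q 1)) i q = 0" by simp
    then have "ev z i p = 0" by (simp add: cm_def mm_gen_r[OF vp'(1)] mm_gen_l[OF vp'(2)])
    then show ?thesis using ev_sound[OF h(2)] ev_H[OF h(1) vp'(2)] ev_SS[OF v] by simp
  qed
  have "z \<simeq> Add h (SS a)" by (rule h(2))
  also have "\<dots> \<simeq> Add h Zero" by (rule caddr[OF S_zero]) (rule a0)
  also have "\<dots> \<simeq> h" by (rule stl_eq.add_zero)
  finally show ?thesis using wz h(1) unfolding in_H_def by blast
qed

end

theorem lemma2p5:
  fixes n :: nat
    and sm :: "'k::comm_ring_1 \<Rightarrow> 'r::ring_1 \<Rightarrow> 'r"
    and B :: "'r set"
  assumes n3: "n \<ge> 3"
    and alg: "is_K_algebra sm"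
    and basis: "is_K_basis sm B"
    and one_in_B: "1 \<in> B"
  shows
    \<comment> \<open>H is a subalgebra\<close>
    "in_H n sm (Zero :: ('k, 'r) expr)
     \<and> (\<forall>x y. in_H n sm x \<and> in_H n sm y \<longrightarrow> in_H n sm (Add x y))
     \<and> (\<forall>k x. in_H n sm x \<longrightarrow> in_H n sm (Smul k x))
     \<and> (\<forall>x y. in_H n sm x \<and> in_H n sm y \<longrightarrow> in_H n sm (Br x y))
     \<comment> \<open>H contains the center\<close>
     \<and> (\<forall>z. in_center n sm z \<longrightarrow> in_H n sm z)
     \<comment> \<open>[H, X_ij(R)] is contained in X_ij(R)\<close>
     \<and> (\<forall>h i j a. in_H n sm h \<and> valid_idx n i \<and> valid_idx n j \<and> i \<noteq> j \<longrightarrow>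
          in_X n sm i j (Br h (Gen i j a)))
     \<comment> \<open>st l_n(R) = H + sum of X_ij(R)\<close>
     \<and> (\<forall>e. wf_expr n e \<longrightarrow>
          (\<exists>h a. in_H n sm h \<and> stl_eq n sm e (Add h (esum (\<lambda>(i, j). Gen i j (a i j)) (offdiag n)))))
     \<comment> \<open>and the sum is direct\<close>
     \<and> (\<forall>h a. in_H n sm h \<and>
          stl_eq n sm (Add h (esum (\<lambda>(i, j). Gen i j (a i j)) (offdiag n))) Zero \<longrightarrow>
          stl_eq n sm h Zero \<and>
          (\<forall>i j. valid_idx n i \<and> valid_idx n j \<and> i \<noteq> j \<longrightarrow> stl_eq n sm (Gen i j (a i j)) Zero))"
proof -
  interpret stl n sm by (rule stl.intro[OF alg n3])
  have Hwf: "\<And>h::('k,'r) expr. H_span n h \<Longrightarrow> wf_expr n h"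
  proof -
    fix h :: "('k,'r) expr" assume "H_span n h"
    then show "wf_expr n h" by (induction rule: H_span.induct) (auto simp: valid_idx_def)
  qed
  have HI: "\<And>e h::('k,'r) expr. wf_expr n e \<Longrightarrow> H_span n h \<Longrightarrow> e \<simeq> h \<Longrightarrow> in_H n sm e"
    unfolding in_H_def by blast
  have p1: "in_H n sm (Zero :: ('k, 'r) expr)" by (rule HI[OF _ H_span.zero r]) simp
  have p2: "\<forall>x y. in_H n sm x \<and> in_H n sm y \<longrightarrow> in_H n sm (Add x y)"
  proof (intro allI impI)
    fix x y :: "('k,'r) expr" assume "in_H n sm x \<and> in_H n sm y"
    then obtain hx hy where "wf_expr n x" "wf_expr n y" "H_span n hx" "H_span n hy" "x \<simeq> hx" "y \<simeq> hy"
      unfolding in_H_def by blast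
    then show "in_H n sm (Add x y)" using HI[OF _ H_span.add cadd] by simp
  qed
  have p3: "\<forall>k x. in_H n sm x \<longrightarrow> in_H n sm (Smul k x)"
  proof (intro allI impI)
    fix k and x :: "('k,'r) expr" assume "in_H n sm x"
    then obtain hx where "wf_expr n x" "H_span n hx" "x \<simeq> hx"
      unfolding in_H_def by blast
    then show "in_H n sm (Smul k x)" using HI[OF _ H_span.smul csmul] by simp
  qed
  have p4: "\<forall>x y. in_H n sm x \<and> in_H n sm y \<longrightarrow> in_H n sm (Br x y)"
  proof (intro allI impI)
    fix x y :: "('k,'r) expr" assume "in_H n sm x \<and> in_H n sm y"
    then obtain hx hy where w: "wf_expr n x" "wf_expr n y" and hs: "H_span n hx" "H_span n hy"
      and e: "x \<simeq> hx" "y \<simeq> hy"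
      unfolding in_H_def by blast
    obtain h where h: "H_span n h" "Br x hy \<simeq> h" using HH[OF hs(2) hs(1) e(1)] by blast
    have "Br x y \<simeq> h" by (rule t[OF cbrr[OF e(2)] h(2)])
    then show "in_H n sm (Br x y)" using HI[OF _ h(1)] w by simp
  qed
  have p5: "\<forall>z. in_center n sm z \<longrightarrow> in_H n sm z" using center by blast
  have p6: "\<forall>h i j a. in_H n sm h \<and> valid_idx n i \<and> valid_idx n j \<and> i \<noteq> j \<longrightarrow>
          in_X n sm i j (Br h (Gen i j a))"
  proof (intro allI impI)
    fix h :: "('k,'r) expr" and i j a
    assume a: "in_H n sm h \<and> valid_idx n i \<and> valid_idx n j \<and> i \<noteq> j"
    then obtain h' where h': "H_span n h'" "h \<simeq> h'" unfolding in_H_def by blast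
    have v: "vp i j" using a unfolding vp_def by blast
    obtain c where c: "Br h' (Gen i j a) \<simeq> Gen i j c" using HX[OF h'(1) v] unfolding isX_def by blast
    show "in_X n sm i j (Br h (Gen i j a))" unfolding in_X_def using t[OF cbrl[OF h'(2)] c] by blast
  qed
  have p7: "\<forall>e. wf_expr n e \<longrightarrow>
          (\<exists>h a. in_H n sm h \<and> stl_eq n sm e (Add h (esum (\<lambda>(i, j). Gen i j (a i j)) (offdiag n))))"
  proof (intro allI impI)
    fix e :: "('k,'r) expr" assume "wf_expr n e"
    then obtain h a where h: "H_span n h" "e \<simeq> Add h (SS a)" using N_all unfolding NN_def by blast
    have "in_H n sm h" by (rule HI[OF Hwf[OF h(1)] h(1) r])
    then show "\<exists>h a. in_H n sm h \<and> stl_eq n sm e (Add h (esum (\<lambda>(i, j). Gen i j (a i j)) (offdiag n)))"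
      using h(2) by blast
  qed
  have p8: "\<forall>h a. in_H n sm h \<and>
          stl_eq n sm (Add h (esum (\<lambda>(i, j). Gen i j (a i j)) (offdiag n))) Zero \<longrightarrow>
          stl_eq n sm h Zero \<and>
          (\<forall>i j. valid_idx n i \<and> valid_idx n j \<and> i \<noteq> j \<longrightarrow> stl_eq n sm (Gen i j (a i j)) Zero)"
  proof (intro allI impI)
    fix h :: "('k,'r) expr" and a
    assume a: "in_H n sm h \<and> stl_eq n sm (Add h (esum (\<lambda>(i, j). Gen i j (a i j)) (offdiag n))) Zero"
    then obtain h' where h': "H_span n h'" "h \<simeq> h'" unfolding in_H_def by blast
    have "h \<simeq> Zero \<and> (\<forall>i j. vp i j \<longrightarrow> Gen i j (a i j) \<simeq> Zero)"
      using direct[OF h'(1) h'(2)] a by blast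
    then show "stl_eq n sm h Zero \<and>
          (\<forall>i j. valid_idx n i \<and> valid_idx n j \<and> i \<noteq> j \<longrightarrow> stl_eq n sm (Gen i j (a i j)) Zero)"
      unfolding vp_def by blast
  qed
  show ?thesis using p1 p2 p3 p4 p5 p6 p7 p8 by blast
qed

end
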